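(* Let $X$ be a compact metric space and $f\colon X\to X$ continuous. Suppose there is a full orbit $\bar x=(x_i)_{i\in\mathbb Z}$ (i.e. $f(x_i)=x_{i+1}$ for all $i\in\mathbb Z$) such that $x_0\notin\lambda(\bar x)$. Then $\mathrm{Per}(\bar x)=\mathbb N$, and consequently $\mathrm{Per}(2^f)=\mathbb N$.
   Context: $2^X$ is the space of nonempty closed subsets of $X$ with the Hausdorff metric, and $2^f(C)=f(C)$. A full orbit of $x$ is a sequence $\bar x=(x_i)_{i\in\mathbb Z}$ in $X$ with $x_0=x$ and $f(x_i)=x_{i+1}$ for all $i$. Its limit set is $\lambda(\bar x)=\alpha(\bar x)\cup\omega(\bar x)=\bigcap_{m\ge 0}\overline{\bigcup_{n\ge m}\{x_{-n},x_n\}}$. For a full orbit $\bar x$, $\mathrm{Per}(\bar x)$ is the set of $k\in\mathbb N$ such that $\overline{\{x_{mk}:m\in\mathbb Z\}}\in 2^X$ is a periodic point of $2^f$ with fundamental period $k$. $\mathrm{Per}(2^f)$ is the set of fundamental periods of periodic points of $2^f$. *)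

theory Defs
  imports "HOL-Analysis.Analysis"
begin

text \<open>The hyperspace 2^X: nonempty closed subsets of X.  (The Hausdorff metric
  plays no role for periodicity, which only concerns iteration of 2^f.)\<close>
definition hyperspace :: "'a::metric_space set \<Rightarrow> 'a set set" where
  "hyperspace X = {C. C \<noteq> {} \<and> closed C \<and> C \<subseteq> X}"

definition induced_map :: "('a \<Rightarrow> 'a) \<Rightarrow> 'a set \<Rightarrow> 'a set" where
  "induced_map f C = f ` C"

definition has_fund_period :: "('b \<Rightarrow> 'b) \<Rightarrow> 'b \<Rightarrow> nat \<Rightarrow> bool" where
  "has_fund_period g p k \<longleftrightarrow>
     0 < k \<and> (g ^^ k) p = p \<and> (\<forall>j. 0 < j \<and> j < k \<longrightarrow> (g ^^ j) p \<noteq> p)"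

definition full_orbit :: "'a set \<Rightarrow> ('a \<Rightarrow> 'a) \<Rightarrow> (int \<Rightarrow> 'a) \<Rightarrow> bool" where
  "full_orbit X f x \<longleftrightarrow> (\<forall>i. x i \<in> X \<and> f (x i) = x (i + 1))"

text \<open>Limit set lambda(x) = alpha(x) \<union> omega(x).\<close>
definition limit_set :: "(int \<Rightarrow> 'a::metric_space) \<Rightarrow> 'a set" where
  "limit_set x = (\<Inter>m::nat. closure (\<Union>n\<in>{m..}. {x (- int n), x (int n)}))"

definition orbit_Per :: "'a::metric_space set \<Rightarrow> ('a \<Rightarrow> 'a) \<Rightarrow> (int \<Rightarrow> 'a) \<Rightarrow> nat set" where
  "orbit_Per X f x = {k. 0 < k \<and>
      closure {x (m * int k) | m. True} \<in> hyperspace X \<and>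
      has_fund_period (induced_map f) (closure {x (m * int k) | m. True}) k}"

definition hyper_Per :: "'a::metric_space set \<Rightarrow> ('a \<Rightarrow> 'a) \<Rightarrow> nat set" where
  "hyper_Per X f = {k. \<exists>C\<in>hyperspace X. has_fund_period (induced_map f) C k}"

end

theory Submission
  imports Defs
begin

lemma orbit_iter:
  assumes "full_orbit X f x"
  shows "x (a + int n) = (f ^^ n) (x a)"
proof (induction n)
  case 0 then show ?case by simp
next
  case (Suc n)
  have "x (a + int (Suc n)) = f (x (a + int n))"
    using assms unfolding full_orbit_def by (metis add.assoc of_nat_Suc add.commute)
  then show ?case using Suc by simp
qed

lemma closure_image_eq:
  fixes X A :: "'a::metric_space set" and f :: "'a \<Rightarrow> 'a"
  assumes "compact X" "continuous_on X f" "A \<subseteq> X"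
  shows "f ` closure A = closure (f ` A)"
proof
  have cX: "closed X" using assms(1) compact_imp_closed by blast
  have cl: "closure A \<subseteq> X" using closure_minimal[OF assms(3) cX] .
  have cf: "continuous_on (closure A) f" using continuous_on_subset[OF assms(2) cl] .
  show "f ` closure A \<subseteq> closure (f ` A)"
    using image_closure_subset[OF cf closed_closure closure_subset] .
  have "compact (closure A)" using compact_Int_closed[OF assms(1) closed_closure, of A] cl
    by (simp add: Int_absorb1)
  then have "compact (f ` closure A)"
    using compact_continuous_image[OF cf] by blast
  then have "closed (f ` closure A)" by (rule compact_imp_closed)
  moreover have "f ` A \<subseteq> f ` closure A" using closure_subset by (rule image_mono)
  ultimately show "closure (f ` A) \<subseteq> f ` closure A" by (intro closure_minimal)
qed

lemma self_in_limit:
  fixes x :: "int \<Rightarrow> 'a::metric_space"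
  assumes "full_orbit X f x" "x i = x 0" "i \<noteq> 0"
  shows "x 0 \<in> limit_set x"
proof -
  define p where "p = nat \<bar>i\<bar>"
  have pp: "p \<ge> 1" using assms(3) p_def by simp
  have xp: "x (int p) = x 0"
  proof (cases "i > 0")
    case True then show ?thesis using assms(2) p_def by simp
  next
    case False
    then have "i = - int p" using p_def by simp
    then have "x 0 = (f ^^ p) (x i)" using orbit_iter[OF assms(1), of i p] by simp
    also have "\<dots> = x (0 + int p)" using orbit_iter[OF assms(1), of 0 p] assms(2) by simp
    finally show ?thesis by simp
  qed
  have all: "x (int (t * p)) = x 0" for t
  proof (induction t)
    case 0 then show ?case by simp
  next
    case (Suc t)
    have "x (int (Suc t * p)) = x (int p + int (t * p))" by (simp add: algebra_simps)
    also have "\<dots> = (f ^^ (t*p)) (x (int p))" by (rule orbit_iter[OF assms(1)])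
    also have "\<dots> = (f ^^ (t*p)) (x 0)" using xp by simp
    also have "\<dots> = x (0 + int (t*p))" using orbit_iter[OF assms(1), of 0 "t*p"] by simp
    finally show ?case using Suc by simp
  qed
  show ?thesis unfolding limit_set_def
  proof
    fix m :: nat
    have "m * p \<ge> m" using pp by simp
    then have "x 0 \<in> (\<Union>n\<in>{m..}. {x (- int n), x (int n)})"
      using all[of m] by (intro UN_I[of "m*p"]) auto
    then show "x 0 \<in> closure (\<Union>n\<in>{m..}. {x (- int n), x (int n)})"
      by (rule subsetD[OF closure_subset])
  qed
qed

lemma not_in_shift_closure:
  fixes x :: "int \<Rightarrow> 'a::metric_space"
  assumes "full_orbit X f x" "x 0 \<notin> limit_set x" "\<And>m. (m::int) * k + j \<noteq> 0"
  shows "x 0 \<notin> closure {x (m * k + j) | m. True}"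
proof
  assume H: "x 0 \<in> closure {x (m * k + j) | m. True}"
  obtain m0 :: nat where m0: "x 0 \<notin> closure (\<Union>n\<in>{m0..}. {x (- int n), x (int n)})"
    using assms(2) unfolding limit_set_def by blast
  define S where "S = (\<Union>n\<in>{m0..}. {x (- int n), x (int n)})"
  define F where "F = x ` {i. i \<noteq> 0 \<and> \<bar>i\<bar> < int m0}"
  have fin: "finite F" unfolding F_def
    by (rule finite_imageI, rule finite_subset[of _ "{- int m0..int m0}"]) auto
  have sub: "{x (m * k + j) | m. True} \<subseteq> S \<union> F"
  proof
    fix y assume "y \<in> {x (m * k + j) | m. True}"
    then obtain m where y: "y = x (m*k+j)" by blast
    define i where "i = m*k+j"
    have i0: "i \<noteq> 0" using assms(3) i_def by simp
    show "y \<in> S \<union> F"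
    proof (cases "\<bar>i\<bar> < int m0")
      case True then show ?thesis using y i_def i0 F_def by auto
    next
      case False
      then have "nat \<bar>i\<bar> \<in> {m0..}" by auto
      moreover have "i = - int (nat \<bar>i\<bar>) \<or> i = int (nat \<bar>i\<bar>)" by linarith
      then have "y \<in> {x (- int (nat \<bar>i\<bar>)), x (int (nat \<bar>i\<bar>))}"
        using y i_def by (metis insertCI)
      ultimately show ?thesis unfolding S_def by blast
    qed
  qed
  have "closure {x (m * k + j) | m. True} \<subseteq> closure S \<union> F"
    using closure_mono[OF sub] closure_Un finite_imp_closed[OF fin] closure_closed by (metis)
  then have "x 0 \<in> F" using H m0 S_def by blast
  then obtain i where "i \<noteq> 0" "x i = x 0" unfolding F_def by auto
  then show False using self_in_limit[OF assms(1)] assms(2) by blast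
qed

lemma iter_C:
  fixes X :: "'a::metric_space set"
  assumes "compact X" "continuous_on X f" "full_orbit X f x"
  shows "(induced_map f ^^ j) (closure {x (m * k) | m. True}) = closure {x (m * k + int j) | m. True}"
proof (induction j)
  case 0 then show ?case by simp
next
  case (Suc j)
  have A: "{x (m * k + int j) | m. True} \<subseteq> X" using assms(3) unfolding full_orbit_def by auto
  have fo: "\<And>i. f (x i) = x (i + 1)" using assms(3) unfolding full_orbit_def by auto
  have "f ` {x (m * k + int j) | m. True} = {x (m * k + int (Suc j)) | m. True}"
  proof
    show "f ` {x (m * k + int j) | m. True} \<subseteq> {x (m * k + int (Suc j)) | m. True}"
    proof
      fix y assume "y \<in> f ` {x (m * k + int j) | m. True}"
      then obtain m where "y = f (x (m * k + int j))" by blast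
      then have "y = x (m * k + int (Suc j))" by (simp add: fo algebra_simps)
      then show "y \<in> {x (m * k + int (Suc j)) | m. True}" by blast
    qed
    show "{x (m * k + int (Suc j)) | m. True} \<subseteq> f ` {x (m * k + int j) | m. True}"
    proof
      fix y assume "y \<in> {x (m * k + int (Suc j)) | m. True}"
      then obtain m where "y = x (m * k + int (Suc j))" by blast
      then have "y = f (x (m * k + int j))" by (simp add: fo algebra_simps)
      then show "y \<in> f ` {x (m * k + int j) | m. True}" by blast
    qed
  qed
  then show ?case using Suc closure_image_eq[OF assms(1,2) A]
    by (simp add: induced_map_def)
qed

theorem proposition4p2:
  fixes X :: "'a::metric_space set" and f :: "'a \<Rightarrow> 'a" and x :: "int \<Rightarrow> 'a"
  assumes "compact X"
    and "continuous_on X f" and "f ` X \<subseteq> X"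
    and "full_orbit X f x"
    and "x 0 \<notin> limit_set x"
  shows "orbit_Per X f x = {k. 1 \<le> k} \<and> hyper_Per X f = {k. 1 \<le> k}"
proof -
  have key: "closure {x (m * int k) | m. True} \<in> hyperspace X \<and>
      has_fund_period (induced_map f) (closure {x (m * int k) | m. True}) k" if k: "k \<ge> 1" for k
  proof
    have cX: "closed X" using assms(1) compact_imp_closed by blast
    have "{x (m * int k) | m. True} \<subseteq> X" using assms(4) unfolding full_orbit_def by auto
    then show "closure {x (m * int k) | m. True} \<in> hyperspace X"
      unfolding hyperspace_def using closure_minimal[OF _ cX] by auto
    have "(induced_map f ^^ k) (closure {x (m * int k) | m. True}) = closure {x (m * int k + int k) | m. True}"
      by (rule iter_C[OF assms(1,2,4)])
    also have "{x (m * int k + int k) | m. True} = {x (m * int k) | m. True}"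
    proof -
      have "\<And>m. m * int k + int k = (m+1) * int k" "\<And>m. m * int k = (m - 1) * int k + int k"
        by (auto simp: algebra_simps)
      then show ?thesis by (smt (verit, best) Collect_cong)
    qed
    finally have e: "(induced_map f ^^ k) (closure {x (m * int k) | m. True}) = closure {x (m * int k) | m. True}" .
    have ne: "(induced_map f ^^ j) (closure {x (m * int k) | m. True}) \<noteq> closure {x (m * int k) | m. True}"
      if j: "0 < j" "j < k" for j
    proof -
      have "m * int k + int j \<noteq> 0" for m
      proof
        assume "m * int k + int j = 0"
        then have "int j = (-m) * int k" by simp
        then have "int k dvd int j" by simp
        then show False using j by (metis dvd_imp_le int_dvd_int_iff not_le)
      qed
      then have "x 0 \<notin> closure {x (m * int k + int j) | m. True}"
        using not_in_shift_closure[OF assms(4,5)] by blast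
      moreover have "x 0 \<in> {x (m * int k) | m. True}"
        by (rule CollectI, rule exI[of _ 0]) simp
      then have "x 0 \<in> closure {x (m * int k) | m. True}"
        by (rule subsetD[OF closure_subset])
      moreover have "(induced_map f ^^ j) (closure {x (m * int k) | m. True}) = closure {x (m * int k + int j) | m. True}"
        by (rule iter_C[OF assms(1,2,4)])
      ultimately show ?thesis by auto
    qed
    show "has_fund_period (induced_map f) (closure {x (m * int k) | m. True}) k"
      unfolding has_fund_period_def using e ne k by auto
  qed
  have 1: "orbit_Per X f x = {k. 1 \<le> k}"
  proof (intro set_eqI iffI)
    fix k :: nat assume "k \<in> orbit_Per X f x" then show "k \<in> {k. 1 \<le> k}"
      unfolding orbit_Per_def by simp
  next
    fix k :: nat assume "k \<in> {k. 1 \<le> k}"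
    then have "k \<ge> 1" by simp
    from key[OF this] this show "k \<in> orbit_Per X f x"
      unfolding orbit_Per_def by simp
  qed
  have 2: "hyper_Per X f = {k. 1 \<le> k}"
  proof (intro set_eqI iffI)
    fix k :: nat assume "k \<in> hyper_Per X f" then show "k \<in> {k. 1 \<le> k}"
      unfolding hyper_Per_def has_fund_period_def by auto
  next
    fix k :: nat assume "k \<in> {k. 1 \<le> k}"
    then have "k \<ge> 1" by simp
    from key[OF this] show "k \<in> hyper_Per X f"
      unfolding hyper_Per_def by blast
  qed
  show ?thesis using 1 2 by blast
qed

end
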